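(* Let $C\subseteq\mathbb F_2^n$ be a classical linear code of distance $d$ with dual code $C^\perp$, let $1\le t\le n$, and let $\Gamma_t=\{\gamma\subseteq[n]: |\gamma|=t\}$, so that $\hat\Gamma=\Gamma_{\le t}=\{e\subseteq[n]: 0<|e|\le t\}$. Let $D$ be the real matrix with rows indexed by $s\in C^\perp\setminus\{0\}$, columns indexed by $a\in\Gamma_{\le t}$, and entries $D[s,a]=1$ if $a\subseteq s$ and $0$ otherwise. If $d\ge 2t+1$, then $D$ has full rank (rank $|\Gamma_{\le t}|$).
   Context: $C^\perp=\{a\in\mathbb F_2^n: a\cdot c=0\ \forall c\in C\}$. The distance of $C$ is $d=\min\{\mathrm{wt}(c): c\in C\setminus\{0\}\}$. Vectors in $\mathbb F_2^n$ are identified with their support sets in $[n]$. *)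

theory Defs
  imports "HOL-Analysis.Analysis" "HOL-Library.Function_Algebras"
begin

text \<open>Vectors of F_2^n are identified with their supports, subsets of [n] = {1..n}.\<close>

definition linear_code :: "nat \<Rightarrow> nat set set \<Rightarrow> bool" where
  "linear_code n C \<longleftrightarrow> C \<subseteq> Pow {1..n} \<and> {} \<in> C \<and>
     (\<forall>x\<in>C. \<forall>y\<in>C. (x - y) \<union> (y - x) \<in> C)"

definition dual_code :: "nat \<Rightarrow> nat set set \<Rightarrow> nat set set" where
  "dual_code n C = {a. a \<subseteq> {1..n} \<and> (\<forall>c\<in>C. even (card (a \<inter> c)))}"

text \<open>Distance: minimum weight of a nonzero codeword (defined when C has a nonzero word).\<close>
definition code_distance :: "nat set set \<Rightarrow> nat" where
  "code_distance C = Min (card ` (C - {{}}))"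

definition Gamma_le :: "nat \<Rightarrow> nat \<Rightarrow> nat set set" where
  "Gamma_le n t = {e. e \<subseteq> {1..n} \<and> 0 < card e \<and> card e \<le> t}"

definition D_entry :: "nat set \<Rightarrow> nat set \<Rightarrow> real" where
  "D_entry s a = (if a \<subseteq> s then 1 else 0)"

text \<open>Rank of a real matrix M with row index set R and column index set K:
  the dimension of the span of its columns, each column being the real vector
  (function) i \<mapsto> M i j on the rows R (zero outside R), in the real vector
  space of real-valued functions with pointwise operations.\<close>
definition mat_rank :: "'r set \<Rightarrow> 'c set \<Rightarrow> ('r \<Rightarrow> 'c \<Rightarrow> real) \<Rightarrow> nat" where
  "mat_rank R K M = vector_space.dim (\<lambda>(c::real) f. (\<lambda>i. c * f i))
     ((\<lambda>j. \<lambda>i. if i \<in> R then M i j else 0) ` K)"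

end

theory Submission
  imports Defs
begin

definition sg :: "nat set \<Rightarrow> int" where "sg A = (-1) ^ card A"

lemma flip_sum_zero:
  fixes g :: "'a \<Rightarrow> int"
  assumes "finite A" "\<And>x. x \<in> A \<Longrightarrow> f x \<in> A" "\<And>x. x \<in> A \<Longrightarrow> f (f x) = x"
    "\<And>x. x \<in> A \<Longrightarrow> g (f x) = - g x"
  shows "sum g A = 0"
proof -
  have b: "bij_betw f A A"
    by (rule bij_betwI[where g=f]) (use assms in auto)
  have "sum g A = sum (\<lambda>x. g (f x)) A" using sum.reindex_bij_betw[OF b, of g] by simp
  also have "\<dots> = - sum g A" using assms(4) by (simp add: sum_negf)
  finally show ?thesis by simp
qed

lemma sg_symdiff:
  assumes "finite a"
  shows "sg (a \<inter> ((x - y) \<union> (y - x))) = sg (a \<inter> x) * sg (a \<inter> y)"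
proof -
  have f: "finite (a \<inter> z)" for z using assms by simp
  have 1: "card (a \<inter> x) = card (a \<inter> x - y) + card (a \<inter> x \<inter> y)"
    using card_Int_Diff[of "a \<inter> x" y] f by simp
  have 2: "card (a \<inter> y) = card (a \<inter> y - x) + card (a \<inter> x \<inter> y)"
    using card_Int_Diff[of "a \<inter> y" x] f by (simp add: Int_commute Int_left_commute)
  have 3: "card (a \<inter> ((x - y) \<union> (y - x))) = card (a \<inter> x - y) + card (a \<inter> y - x)"
  proof -
    have "a \<inter> ((x - y) \<union> (y - x)) = (a \<inter> x - y) \<union> (a \<inter> y - x)" by blast
    then show ?thesis using card_Un_disjoint[of "a \<inter> x - y" "a \<inter> y - x"] assms by auto
  qed
  show ?thesis unfolding sg_def 1 2 3
    by (simp add: power_add flip: mult.assoc)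
qed

lemma sg_symdiff':
  assumes "finite a"
  shows "sg (((x - y) \<union> (y - x)) \<inter> a) = sg (x \<inter> a) * sg (y \<inter> a)"
  using sg_symdiff[OF assms, of x y] by (simp add: Int_commute)

lemma char_sum:
  assumes lc: "linear_code n C" and a: "a \<subseteq> {1..n}"
  shows "(\<Sum>c\<in>C. sg (a \<inter> c)) = (if a \<in> dual_code n C then int (card C) else 0)"
proof -
  have fin: "finite C" using lc unfolding linear_code_def
    by (meson finite_Pow_iff finite_atLeastAtMost finite_subset)
  have fa: "finite a" using a finite_subset by blast
  show ?thesis
  proof (cases "a \<in> dual_code n C")
    case True
    then have "\<forall>c\<in>C. even (card (a \<inter> c))" unfolding dual_code_def by auto
    then have "(\<Sum>c\<in>C. sg (a \<inter> c)) = (\<Sum>c\<in>C. 1)"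
      by (intro sum.cong) (auto simp: sg_def)
    then show ?thesis using True by simp
  next
    case False
    then obtain c0 where c0: "c0 \<in> C" "odd (card (a \<inter> c0))"
      using a unfolding dual_code_def by auto
    have "(\<Sum>c\<in>C. sg (a \<inter> c)) = 0"
    proof (rule flip_sum_zero[where f="\<lambda>c. (c - c0) \<union> (c0 - c)"])
      show "finite C" by (rule fin)
      show "(x - c0) \<union> (c0 - x) \<in> C" if "x \<in> C" for x
        using lc that c0 unfolding linear_code_def by blast
      show "((x - c0) \<union> (c0 - x) - c0) \<union> (c0 - ((x - c0) \<union> (c0 - x))) = x" for x
        by blast
      show "sg (a \<inter> ((x - c0) \<union> (c0 - x))) = - sg (a \<inter> x)" for x
        using sg_symdiff[OF fa, of x c0] c0(2) by (simp add: sg_def)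
    qed
    then show ?thesis using False by simp
  qed
qed

lemma shift_sum:
  assumes U: "U \<subseteq> {1..n}" and c: "c \<subseteq> {1..n}" and nc: "\<not> c \<subseteq> U"
  shows "(\<Sum>s\<in>{s \<in> Pow {1..n}. U \<subseteq> s}. sg (s \<inter> c)) = 0"
proof -
  obtain i where i: "i \<in> c" "i \<notin> U" using nc by blast
  have fc: "finite c" using c finite_subset by blast
  show ?thesis
  proof (rule flip_sum_zero[where f="\<lambda>s. (s - {i}) \<union> ({i} - s)"])
    show "finite {s \<in> Pow {1..n}. U \<subseteq> s}" by simp
    show "(x - {i}) \<union> ({i} - x) \<in> {s \<in> Pow {1..n}. U \<subseteq> s}"
      if "x \<in> {s \<in> Pow {1..n}. U \<subseteq> s}" for x
      using that i c by auto
    show "((x - {i}) \<union> ({i} - x) - {i}) \<union> ({i} - ((x - {i}) \<union> ({i} - x))) = x" for x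
      by blast
    show "sg (((x - {i}) \<union> ({i} - x)) \<inter> c) = - sg (x \<inter> c)" for x
      using sg_symdiff'[OF fc, of x "{i}"] i by (simp add: sg_def)
  qed
qed

lemma count_lemma:
  assumes lc: "linear_code n C" and U: "U \<subseteq> {1..n}" and dU: "card U < code_distance C"
  shows "int (card C) * int (card {s \<in> dual_code n C. U \<subseteq> s}) = int (card {s \<in> Pow {1..n}. U \<subseteq> s})"
proof -
  define S where "S = {s \<in> Pow {1..n}. U \<subseteq> s}"
  have finC: "finite C" using lc unfolding linear_code_def
    by (meson finite_Pow_iff finite_atLeastAtMost finite_subset)
  have finS: "finite S" unfolding S_def by simp
  have CP: "C \<subseteq> Pow {1..n}" "{} \<in> C" using lc unfolding linear_code_def by auto
  have fU: "finite U" using U finite_subset by blast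
  have "(\<Sum>s\<in>S. \<Sum>c\<in>C. sg (s \<inter> c)) = (\<Sum>s\<in>S. if s \<in> dual_code n C then int (card C) else 0)"
    by (intro sum.cong refl char_sum[OF lc]) (auto simp: S_def)
  also have "\<dots> = (\<Sum>s\<in>{s\<in>S. s \<in> dual_code n C}. int (card C))"
    using finS by (simp add: sum.inter_filter[symmetric])
  also have "{s\<in>S. s \<in> dual_code n C} = {s \<in> dual_code n C. U \<subseteq> s}"
    unfolding S_def dual_code_def by auto
  finally have L: "(\<Sum>s\<in>S. \<Sum>c\<in>C. sg (s \<inter> c)) = int (card C) * int (card {s \<in> dual_code n C. U \<subseteq> s})"
    by simp
  have "(\<Sum>s\<in>S. \<Sum>c\<in>C. sg (s \<inter> c)) = (\<Sum>c\<in>C. \<Sum>s\<in>S. sg (s \<inter> c))"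
    by (rule sum.swap)
  also have "\<dots> = (\<Sum>c\<in>C. if c = {} then int (card S) else 0)"
  proof (intro sum.cong refl)
    fix c assume c: "c \<in> C"
    show "(\<Sum>s\<in>S. sg (s \<inter> c)) = (if c = {} then int (card S) else 0)"
    proof (cases "c = {}")
      case True then show ?thesis by (simp add: sg_def)
    next
      case False
      have "code_distance C \<le> card c" unfolding code_distance_def
        using c False finC by (intro Min_le) auto
      have "\<not> c \<subseteq> U"
      proof
        assume "c \<subseteq> U"
        then have "card c \<le> card U" by (rule card_mono[OF fU])
        then show False using \<open>code_distance C \<le> card c\<close> dU by linarith
      qed
      then show ?thesis using shift_sum[OF U _ , of c] c CP False unfolding S_def by auto
    qed
  qed
  also have "\<dots> = int (card S)" using finC CP(2) by (simp add: sum.delta)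
  finally show ?thesis using L unfolding S_def by simp
qed

lemma quad_lemma:
  assumes X: "finite X" and G: "finite G"
  shows "(\<Sum>s\<in>X. (\<Sum>a\<in>G. w a * D_entry s a)^2)
     = (\<Sum>a\<in>G. \<Sum>b\<in>G. w a * w b * real (card {s\<in>X. a \<union> b \<subseteq> s}))"
proof -
  have "(\<Sum>s\<in>X. (\<Sum>a\<in>G. w a * D_entry s a)^2)
      = (\<Sum>s\<in>X. \<Sum>a\<in>G. \<Sum>b\<in>G. w a * w b * (if a \<union> b \<subseteq> s then 1 else 0))"
    by (intro sum.cong refl) (auto simp: power2_eq_square sum_product D_entry_def intro!: sum.cong)
  also have "\<dots> = (\<Sum>a\<in>G. \<Sum>b\<in>G. \<Sum>s\<in>X. w a * w b * (if a \<union> b \<subseteq> s then 1 else 0))"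
    by (subst sum.swap) (simp add: sum.swap[of _ X])
  also have "\<dots> = (\<Sum>a\<in>G. \<Sum>b\<in>G. w a * w b * real (card {s\<in>X. a \<union> b \<subseteq> s}))"
  proof (intro sum.cong refl)
    fix a b
    have "(\<Sum>s\<in>X. (if a \<union> b \<subseteq> s then 1 else 0)) = (\<Sum>s\<in>{s\<in>X. a \<union> b \<subseteq> s}. (1::real))"
      using X by (simp only: sum.inter_filter)
    then show "(\<Sum>s\<in>X. w a * w b * (if a \<union> b \<subseteq> s then 1 else 0)) = w a * w b * real (card {s\<in>X. a \<union> b \<subseteq> s})"
      by (simp add: sum_distrib_left[symmetric])
  qed
  finally show ?thesis .
qed

lemma key_lemma:
  assumes lc: "linear_code n C" and d: "code_distance C \<ge> 2 * t + 1"
    and a0: "a0 \<in> Gamma_le n t" "w a0 \<noteq> 0"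
  shows "\<exists>s \<in> dual_code n C - {{}}. (\<Sum>a\<in>Gamma_le n t. w a * D_entry s a) \<noteq> 0"
proof (rule ccontr)
  assume H: "\<not> ?thesis"
  define G where "G = Gamma_le n t"
  define p where "p s = (\<Sum>a\<in>G. w a * D_entry s a)" for s
  have finG: "finite G" unfolding G_def Gamma_le_def
    by (rule finite_subset[of _ "Pow {1..n}"]) auto
  have finD: "finite (dual_code n C)" unfolding dual_code_def
    by (rule finite_subset[of _ "Pow {1..n}"]) auto
  have p0: "p {} = 0" unfolding p_def G_def Gamma_le_def D_entry_def
    by (intro sum.neutral) auto
  have pz: "p s = 0" if "s \<in> dual_code n C" for s
    using H that p0 unfolding p_def G_def by (cases "s = {}") auto
  have "real (card C) * (\<Sum>s\<in>dual_code n C. (p s)^2)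
     = (\<Sum>a\<in>G. \<Sum>b\<in>G. w a * w b * (real (card C) * real (card {s\<in>dual_code n C. a \<union> b \<subseteq> s})))"
    unfolding p_def quad_lemma[OF finD finG] by (simp add: sum_distrib_left algebra_simps)
  also have "\<dots> = (\<Sum>a\<in>G. \<Sum>b\<in>G. w a * w b * real (card {s\<in>Pow {1..n}. a \<union> b \<subseteq> s}))"
  proof (intro sum.cong refl)
    fix a b assume a: "a \<in> G" and b: "b \<in> G"
    have U: "a \<union> b \<subseteq> {1..n}" using a b unfolding G_def Gamma_le_def by auto
    have "card (a \<union> b) \<le> card a + card b" by (rule card_Un_le)
    also have "\<dots> \<le> 2 * t" using a b unfolding G_def Gamma_le_def by auto
    finally have "card (a \<union> b) < code_distance C" using d by linarith
    from count_lemma[OF lc U this]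
    have "int (card C * card {s\<in>dual_code n C. a \<union> b \<subseteq> s}) = int (card {s\<in>Pow {1..n}. a \<union> b \<subseteq> s})"
      by simp
    then have "card C * card {s\<in>dual_code n C. a \<union> b \<subseteq> s} = card {s\<in>Pow {1..n}. a \<union> b \<subseteq> s}"
      by (simp only: of_nat_eq_iff)
    then have "real (card C * card {s\<in>dual_code n C. a \<union> b \<subseteq> s}) = real (card {s\<in>Pow {1..n}. a \<union> b \<subseteq> s})"
      by (rule arg_cong)
    then show "w a * w b * (real (card C) * real (card {s\<in>dual_code n C. a \<union> b \<subseteq> s}))
      = w a * w b * real (card {s\<in>Pow {1..n}. a \<union> b \<subseteq> s})"
      by (simp only: of_nat_mult)
  qed
  also have "\<dots> = (\<Sum>s\<in>Pow {1..n}. (p s)^2)"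
    unfolding p_def by (rule quad_lemma[symmetric]) (auto simp: finG)
  finally have E: "(\<Sum>s\<in>Pow {1..n}. (p s)^2) = 0" using pz by simp
  obtain b0 where b0: "b0 \<in> G \<and> w b0 \<noteq> 0" "\<And>y. y \<in> G \<and> w y \<noteq> 0 \<Longrightarrow> card b0 \<le> card y"
    using ex_has_least_nat[of "\<lambda>a. a \<in> G \<and> w a \<noteq> 0" a0 card] a0 unfolding G_def by blast
  have "p b0 = (\<Sum>a\<in>G. if a = b0 then w a else 0)"
    unfolding p_def
  proof (intro sum.cong refl)
    fix a assume a: "a \<in> G"
    show "w a * D_entry b0 a = (if a = b0 then w a else 0)"
    proof (cases "a = b0")
      case False
      show ?thesis
      proof (cases "a \<subseteq> b0")
        case True
        then have "a \<subset> b0" using False by auto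
        moreover have "finite b0" using b0(1) unfolding G_def Gamma_le_def
          using finite_subset by blast
        ultimately have "card a < card b0" by (rule psubset_card_mono[rotated])
        then have "w a = 0" using b0(2)[of a] a by fastforce
        then show ?thesis using False by simp
      qed (auto simp: D_entry_def)
    qed (simp add: D_entry_def)
  qed
  also have "\<dots> = w b0" using b0(1) finG by (simp add: sum.delta')
  finally have pb0: "p b0 \<noteq> 0" using b0(1) by simp
  have "(p b0)^2 \<le> (\<Sum>s\<in>Pow {1..n}. (p s)^2)"
    by (rule member_le_sum) (use b0(1) in \<open>auto simp: G_def Gamma_le_def\<close>)
  then show False using E pb0 by simp
qed

lemma sum_fun_app: "finite A \<Longrightarrow> (sum f A) x = (\<Sum>a\<in>A. f a x)"
  by (induction A rule: finite_induct) auto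

theorem corollary4:
  fixes n t :: nat and C :: "nat set set"
  assumes "linear_code n C"
    and "C - {{}} \<noteq> {}"
    and "1 \<le> t" and "t \<le> n"
    and "code_distance C \<ge> 2 * t + 1"
  shows "mat_rank (dual_code n C - {{}}) (Gamma_le n t) D_entry = card (Gamma_le n t)"
proof -
  define R where "R = dual_code n C - {{}}"
  define G where "G = Gamma_le n t"
  define col where "col a = (\<lambda>i. if i \<in> R then D_entry i a else 0)" for a
  interpret V: vector_space "\<lambda>(c::real) (f::nat set \<Rightarrow> real). (\<lambda>i. c * f i)"
    by unfold_locales (auto simp: algebra_simps fun_eq_iff)
  have finG: "finite G" unfolding G_def Gamma_le_def
    by (rule finite_subset[of _ "Pow {1..n}"]) auto
  have K: "\<forall>a\<in>G. w a = 0" if "\<And>s. s \<in> R \<Longrightarrow> (\<Sum>a\<in>G. w a * D_entry s a) = 0" for w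
    using key_lemma[OF assms(1) assms(5), of _ w] that unfolding R_def G_def by blast
  have inj: "inj_on col G"
  proof (rule inj_onI, rule ccontr)
    fix a b assume a: "a \<in> G" and b: "b \<in> G" and e: "col a = col b" and ne: "a \<noteq> b"
    define w where "w x = (if x = a then 1 else if x = b then -1 else (0::real))" for x
    have "\<forall>x\<in>G. w x = 0"
    proof (rule K)
      fix s assume s: "s \<in> R"
      have "(\<Sum>x\<in>G. w x * D_entry s x) = (\<Sum>x\<in>G. (if x = a then D_entry s a else 0) + (if x = b then - D_entry s b else 0))"
        by (intro sum.cong refl) (auto simp: w_def ne)
      also have "\<dots> = D_entry s a - D_entry s b"
        using a b finG by (simp add: sum.distrib sum.delta')
      also have "\<dots> = 0" using fun_cong[OF e, of s] s by (simp add: col_def)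
      finally show "(\<Sum>x\<in>G. w x * D_entry s x) = 0" .
    qed
    then have "w a = 0" using a by blast
    then show False by (simp add: w_def)
  qed
  have ind: "V.independent (col ` G)"
  proof -
    have fc: "finite (col ` G)" using finG by simp
    have "c v = 0" if S: "(\<Sum>v\<in>col ` G. (\<lambda>i. c v * v i)) = 0" "v \<in> col ` G" for c v
    proof -
    have S2: "(\<Sum>a\<in>G. (\<lambda>i. c (col a) * col a i)) = 0"
      using S sum.reindex[OF inj, of "\<lambda>v. (\<lambda>i. c v * v i)"] by simp
    have "\<forall>a\<in>G. c (col a) = 0"
    proof (rule K)
      fix s assume s: "s \<in> R"
      have "0 = (\<Sum>a\<in>G. (\<lambda>i. c (col a) * col a i)) s" using S2 by simp
      also have "\<dots> = (\<Sum>a\<in>G. c (col a) * D_entry s a)"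
        using finG s by (simp add: sum_fun_app col_def)
      finally show "(\<Sum>a\<in>G. c (col a) * D_entry s a) = 0" by simp
    qed
    then show "c v = 0" using that by auto
    qed
    then show ?thesis unfolding V.dependent_finite[OF fc] by blast
  qed
  have "mat_rank R G D_entry = V.dim (col ` G)"
    unfolding mat_rank_def col_def by simp
  also have "\<dots> = card (col ` G)" by (rule V.dim_eq_card_independent[OF ind])
  also have "\<dots> = card G" by (rule card_image[OF inj])
  finally show ?thesis unfolding R_def G_def .
qed

end
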